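(* The rational group $\mathcal{R}$ is flexible: for every pair $E_1,E_2$ of proper nonempty clopen subsets of $\{0,1\}^\omega$ there exists $g\in\mathcal{R}$ with $g(E_1)\subseteq E_2$.
   Context: An asynchronous binary transducer is $(S,s_0,t,o)$ with $S$ finite, $s_0\in S$, $t\colon S\times\{0,1\}\to S$, $o\colon S\times\{0,1\}\to\{0,1\}^*$. For a state $s$ and sequence $\sigma_1\sigma_2\cdots$ let $s_1=s$, $s_{n+1}=t(s_n,\sigma_n)$, and $o(s,\sigma_1\sigma_2\cdots)=o(s_1,\sigma_1)o(s_2,\sigma_2)\cdots$. A homeomorphism $f$ of $\{0,1\}^\omega$ is rational if some transducer satisfies $f(\psi)=o(s_0,\psi)$ for all $\psi$; $\mathcal{R}$ is the group of rational homeomorphisms. *)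

theory Defs
  imports "HOL-Analysis.Analysis"
begin

definition cantor_top :: "(nat \<Rightarrow> bool) topology" where
  "cantor_top = product_topology (\<lambda>_. discrete_topology (UNIV :: bool set)) UNIV"

definition cantor_clopen :: "(nat \<Rightarrow> bool) set \<Rightarrow> bool" where
  "cantor_clopen E \<longleftrightarrow> openin cantor_top E \<and> closedin cantor_top E"

fun trans_run :: "(nat \<Rightarrow> bool \<Rightarrow> nat) \<Rightarrow> nat \<Rightarrow> (nat \<Rightarrow> bool) \<Rightarrow> nat \<Rightarrow> nat" where
  "trans_run t s \<psi> 0 = s"
| "trans_run t s \<psi> (Suc n) = t (trans_run t s \<psi> n) (\<psi> n)"

definition trans_out_prefix ::
  "(nat \<Rightarrow> bool \<Rightarrow> nat) \<Rightarrow> (nat \<Rightarrow> bool \<Rightarrow> bool list) \<Rightarrow> nat \<Rightarrow> (nat \<Rightarrow> bool) \<Rightarrow> nat \<Rightarrow> bool list" where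
  "trans_out_prefix t out s \<psi> n = concat (map (\<lambda>i. out (trans_run t s \<psi> i) (\<psi> i)) [0..<n])"

text \<open>\<open>o(s,\<psi>) = \<phi>\<close>: the infinite concatenation of outputs is the infinite word \<phi>
  (in particular it is infinite).\<close>
definition trans_output_is ::
  "(nat \<Rightarrow> bool \<Rightarrow> nat) \<Rightarrow> (nat \<Rightarrow> bool \<Rightarrow> bool list) \<Rightarrow> nat \<Rightarrow> (nat \<Rightarrow> bool) \<Rightarrow> (nat \<Rightarrow> bool) \<Rightarrow> bool" where
  "trans_output_is t out s \<psi> \<phi> \<longleftrightarrow>
     (\<forall>m. \<exists>n. m < length (trans_out_prefix t out s \<psi> n)) \<and>
     (\<forall>n k. k < length (trans_out_prefix t out s \<psi> n) \<longrightarrow> \<phi> k = trans_out_prefix t out s \<psi> n ! k)"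

definition is_transducer :: "nat set \<Rightarrow> nat \<Rightarrow> (nat \<Rightarrow> bool \<Rightarrow> nat) \<Rightarrow> bool" where
  "is_transducer S s0 t \<longleftrightarrow> finite S \<and> s0 \<in> S \<and> (\<forall>s\<in>S. \<forall>b. t s b \<in> S)"

definition rational_homeo :: "((nat \<Rightarrow> bool) \<Rightarrow> (nat \<Rightarrow> bool)) \<Rightarrow> bool" where
  "rational_homeo f \<longleftrightarrow> homeomorphic_map cantor_top cantor_top f \<and>
     (\<exists>S s0 t out. is_transducer S s0 t \<and> (\<forall>\<psi>. trans_output_is t out s0 \<psi> (f \<psi>)))"

end

theory Submission
  imports Defs
begin


definition pre :: "bool list \<Rightarrow> (nat \<Rightarrow> bool) \<Rightarrow> bool" where
  "pre a x \<longleftrightarrow> (\<forall>i<length a. x i = a!i)"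
definition app :: "bool list \<Rightarrow> (nat \<Rightarrow> bool) \<Rightarrow> (nat \<Rightarrow> bool)" where
  "app a x = (\<lambda>i. if i < length a then a!i else x (i - length a))"
definition drp :: "nat \<Rightarrow> (nat \<Rightarrow> bool) \<Rightarrow> (nat \<Rightarrow> bool)" where
  "drp n x = (\<lambda>i. x (i + n))"
definition TT :: "bool list \<Rightarrow> bool list \<Rightarrow> (nat \<Rightarrow> bool) \<Rightarrow> (nat \<Rightarrow> bool)" where
  "TT a b x = (if \<not> pre a x then app b x
     else if \<not> pre b (drp (length a) x) then drp (length a) x
     else app b (app a (drp (length a + length b) x)))"

lemma pre_app[simp]: "pre a (app a x)" by (simp add: pre_def app_def)
lemma drp_app[simp]: "drp (length a) (app a x) = x" by (simp add: drp_def app_def fun_eq_iff)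
lemma app_drp: "pre a x \<Longrightarrow> app a (drp (length a) x) = x"
  by (auto simp: pre_def drp_def app_def fun_eq_iff)
lemma drp_drp[simp]: "drp n (drp k x) = drp (n+k) x" by (simp add: drp_def add.assoc)
lemma drp_app2: "drp (length b + length a) (app b (app a z)) = z"
  by (simp add: drp_def app_def fun_eq_iff)
lemma drp_app3: "drp (length a + length b) (app b (app a z)) = z"
  by (simp add: drp_def app_def fun_eq_iff)

lemma TT_inv: "TT b a (TT a b x) = x"
proof (cases "pre a x")
  case False
  then show ?thesis by (simp add: TT_def)
next
  case pa: True
  show ?thesis
  proof (cases "pre b (drp (length a) x)")
    case False
    then show ?thesis using pa by (simp add: TT_def app_drp)
  next
    case True
    have e: "drp (length b) (app b (app a (drp (length a + length b) x))) = app a (drp (length a + length b) x)"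
      by simp
    have "app a (app b (drp (length a + length b) x)) = x"
    proof -
      have "app b (drp (length a + length b) x) = drp (length a) x"
        using app_drp[OF True] by (simp add: add.commute)
      then show ?thesis using app_drp[OF pa] by simp
    qed
    then show ?thesis using pa True e
      by (simp add: TT_def drp_app2)
  qed
qed

lemma TT_dep:
  assumes "\<forall>j<length a + length b + k + 1. x j = y j"
  shows "TT a b x k = TT a b y k"
proof -
  have pa: "pre a x = pre a y" using assms by (auto simp: pre_def)
  have pb: "pre b (drp (length a) x) = pre b (drp (length a) y)" using assms by (auto simp: pre_def drp_def)
  have e1: "app b x k = app b y k" using assms by (simp add: app_def)
  have e2: "drp (length a) x k = drp (length a) y k" using assms by (simp add: drp_def)
  have e3: "app b (app a (drp (length a + length b) x)) k = app b (app a (drp (length a + length b) y)) k"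
    using assms by (simp add: app_def drp_def)
  show ?thesis unfolding TT_def pa pb using e1 e2 e3 by simp
qed

lemma cyl_open: "openin cantor_top {y. \<forall>j<M. y j = x j}"
proof -
  have "{y. \<forall>j<M. y j = x j} = (\<Pi>\<^sub>E j\<in>UNIV. if j < M then {x j} else UNIV)"
    by (auto simp: PiE_def Pi_def)
  moreover have "openin cantor_top (\<Pi>\<^sub>E j\<in>UNIV. if j < M then {x j} else UNIV)"
    unfolding cantor_top_def
    by (rule product_topology_basis) (auto intro: finite_subset[of _ "{..<M}"])
  ultimately show ?thesis by simp
qed

lemma topspace_cantor[simp]: "topspace cantor_top = UNIV"
  by (simp add: cantor_top_def)

lemma cont_dep:
  fixes f :: "(nat \<Rightarrow> bool) \<Rightarrow> bool"
  assumes "\<And>x y. \<forall>j<M. x j = y j \<Longrightarrow> f x = f y"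
  shows "continuous_map cantor_top (discrete_topology UNIV) f"
  unfolding continuous_map_def
proof (intro conjI allI impI)
  fix U :: "bool set"
  show "openin cantor_top {x \<in> topspace cantor_top. f x \<in> U}"
  proof (subst openin_subopen, intro ballI)
    fix x assume x: "x \<in> {x \<in> topspace cantor_top. f x \<in> U}"
    have sub: "{y. \<forall>j<M. y j = x j} \<subseteq> {x \<in> topspace cantor_top. f x \<in> U}"
    proof
      fix y assume "y \<in> {y. \<forall>j<M. y j = x j}"
      then have "f y = f x" using assms[of y x] by simp
      then show "y \<in> {x \<in> topspace cantor_top. f x \<in> U}" using x by simp
    qed
    show "\<exists>T. openin cantor_top T \<and> x \<in> T \<and> T \<subseteq> {x \<in> topspace cantor_top. f x \<in> U}"
      using sub cyl_open[of M x] by blast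
  qed
qed auto

lemma TT_cont: "continuous_map cantor_top cantor_top (TT a b)"
  unfolding cantor_top_def[of] continuous_map_componentwise_UNIV
proof
  fix k
  show "continuous_map (product_topology (\<lambda>_. discrete_topology UNIV) UNIV) (discrete_topology UNIV) (\<lambda>x. TT a b x k)"
    using cont_dep[of "length a + length b + k + 1" "\<lambda>x. TT a b x k", OF TT_dep[of a b k]]
    unfolding cantor_top_def by simp
qed

lemma TT_homeo: "homeomorphic_map cantor_top cantor_top (TT a b)"
  apply (rule homeomorphic_maps_imp_map[where g="TT b a"])
  by (simp add: homeomorphic_maps_def TT_cont TT_inv)

lemma open_cyl:
  assumes "openin cantor_top E" "x \<in> E"
  shows "\<exists>w. {y. pre w y} \<subseteq> E"
proof -
  obtain U where U: "finite {i. U i \<noteq> UNIV}" "x \<in> Pi\<^sub>E UNIV U" "Pi\<^sub>E UNIV U \<subseteq> E"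
    using assms unfolding cantor_top_def openin_product_topology_alt by fastforce
  obtain M where M: "\<And>i. U i \<noteq> UNIV \<Longrightarrow> i < M"
    using U(1) by (meson finite_nat_set_iff_bounded mem_Collect_eq)
  have "{y. pre (map x [0..<M]) y} \<subseteq> Pi\<^sub>E UNIV U"
  proof
    fix y assume "y \<in> {y. pre (map x [0..<M]) y}"
    then have "\<forall>i<M. y i = x i" by (simp add: pre_def)
    then have "\<And>i. y i \<in> U i"
    proof -
      fix i
      have xi: "x i \<in> U i" using U(2) by (simp add: PiE_iff)
      show "y i \<in> U i"
      proof (cases "U i = UNIV")
        case False
        then have "i < M" using M by blast
        then show ?thesis using xi \<open>\<forall>i<M. y i = x i\<close> by simp
      qed simp
    qed
    then show "y \<in> Pi\<^sub>E UNIV U" by (auto simp: PiE_def Pi_def)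
  qed
  then have "{y. pre (map x [0..<M]) y} \<subseteq> E" using U(3) by (rule subset_trans)
  then show ?thesis by (rule exI)
qed



definition tt :: "bool list \<Rightarrow> nat \<Rightarrow> bool \<Rightarrow> nat" where
  "tt L k c = (if k < length L \<and> c = L!k \<and> k+1 < length L then k+1 else length L)"
definition outf :: "bool list \<Rightarrow> bool list \<Rightarrow> nat \<Rightarrow> bool \<Rightarrow> bool list" where
  "outf a b k c = (if k < length (a@b) then
      (if c = (a@b)!k then (if k+1 = length (a@b) then b@a else [])
       else (if k < length a then b @ take k a @ [c] else take (k - length a) b @ [c]))
     else [c])"

lemma run_eq: "trans_run (tt L) 0 \<psi> n = (if n < length L \<and> (\<forall>j<n. \<psi> j = L!j) then n else length L)"
  by (induction n) (auto simp: tt_def less_Suc_eq)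

lemma prefix_Suc: "trans_out_prefix t out s \<psi> (Suc n) = trans_out_prefix t out s \<psi> n @ out (trans_run t s \<psi> n) (\<psi> n)"
  by (simp add: trans_out_prefix_def)

lemma step_done:
  assumes n: "n < length (a@b)" "\<forall>j<n. \<psi> j = (a@b)!j"
  shows "outf a b n (\<psi> n) = map (TT a b \<psi>) [0..<length (outf a b n (\<psi> n))] \<and>
         (\<forall>i. TT a b \<psi> (length (outf a b n (\<psi> n)) + i) = \<psi> (Suc n + i))
   \<or> (\<psi> n = (a@b)!n \<and> Suc n < length (a@b) \<and> outf a b n (\<psi> n) = [])"
proof (cases "\<psi> n = (a@b)!n")
  case match: True
  show ?thesis
  proof (cases "Suc n = length (a@b)")
    case False then show ?thesis using match n by (simp add: outf_def)
  next
    case full: True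
    have all: "\<forall>j<length (a@b). \<psi> j = (a@b)!j"
    proof (intro allI impI)
      fix j assume "j < length (a@b)"
      then have "j < n \<or> j = n" using full by linarith
      then show "\<psi> j = (a@b)!j" using n(2) match by blast
    qed
    have pa: "pre a \<psi>" unfolding pre_def
    proof (intro allI impI)
      fix i assume "i < length a"
      then show "\<psi> i = a!i" using all[rule_format, of i] by (simp add: nth_append)
    qed
    have pb: "pre b (drp (length a) \<psi>)" unfolding pre_def drp_def
    proof (intro allI impI)
      fix i assume "i < length b"
      then show "\<psi> (i + length a) = b!i" using all[rule_format, of "i + length a"] by (simp add: nth_append)
    qed
    have T: "TT a b \<psi> = app b (app a (drp (length a + length b) \<psi>))" using pa pb by (simp add: TT_def)
    have o: "outf a b n (\<psi> n) = b@a" using full match n by (simp add: outf_def)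
    show ?thesis
      apply (rule disjI1)
      unfolding o T
      apply (intro conjI)
       apply (rule nth_equalityI)
        apply simp
       apply (simp add: app_def nth_append)
       apply linarith
      apply (intro allI)
      using full by (simp add: app_def drp_def add.commute)
  qed
next
  case mis: False
  show ?thesis
  proof (cases "n < length a")
    case True
    have pa: "\<not> pre a \<psi>" using mis True by (auto simp: pre_def nth_append)
    have T: "TT a b \<psi> = app b \<psi>" using pa by (simp add: TT_def)
    have tk: "take n a = map \<psi> [0..<n]" using n True
      by (intro nth_equalityI) (auto simp: nth_append)
    have o: "outf a b n (\<psi> n) = b @ map \<psi> [0..<n] @ [\<psi> n]" using mis True n tk by (simp add: outf_def)
    show ?thesis
      apply (rule disjI1)
      unfolding o T
      apply (intro conjI)
       apply (rule nth_equalityI; simp add: app_def nth_append)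
       apply (auto simp: app_def nth_append less_Suc_eq)
      done
  next
    case False
    have pa: "pre a \<psi>" using n False by (auto simp: pre_def nth_append)
    have pb: "\<not> pre b (drp (length a) \<psi>)" unfolding pre_def drp_def
    proof
      assume h: "\<forall>i<length b. \<psi> (i + length a) = b ! i"
      have "n - length a < length b" using n(1) False by simp
      then have "\<psi> (n - length a + length a) = b ! (n - length a)" using h by blast
      then have "\<psi> n = (a@b)!n" using False by (simp add: nth_append)
      then show False using mis by simp
    qed
    have T: "TT a b \<psi> = drp (length a) \<psi>" using pa pb by (simp add: TT_def)
    have ar1: "n - length a + length a = n" using False by simp
    have ar2: "\<And>i. n - length a + i + length a = n + i" using False by simp
    have ar3: "\<And>i. i + length a = length a + i" by simp
    have tk: "take (n - length a) b = map \<psi> [length a..<n]" using n False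
      by (intro nth_equalityI) (auto simp: nth_append)
    have o: "outf a b n (\<psi> n) = map \<psi> [length a..<n] @ [\<psi> n]" using mis False n tk by (simp add: outf_def)
    show ?thesis
      apply (rule disjI1)
      unfolding o T
      apply (intro conjI)
       apply (rule nth_equalityI; simp add: drp_def nth_append)
      using False
       apply (auto simp: drp_def nth_append less_Suc_eq ar1 ar2 ar3)
      done
  qed
qed



lemma TT_nil: "TT [] [] \<psi> = \<psi>"
  by (simp add: TT_def pre_def app_def drp_def)

lemma inv:
  fixes a b \<psi>
  defines "P \<equiv> trans_out_prefix (tt (a@b)) (outf a b) 0 \<psi>"
  defines "R \<equiv> trans_run (tt (a@b)) 0 \<psi>"
  shows "(R n < length (a@b) \<longrightarrow> P n = []) \<and>
         (R n = length (a@b) \<longrightarrow> P n = map (TT a b \<psi>) [0..<length (P n)] \<and>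
            (\<forall>i. TT a b \<psi> (length (P n) + i) = \<psi> (n + i)))"
proof (induction n)
  case 0
  have P0: "P 0 = []" by (simp add: P_def trans_out_prefix_def)
  show ?case
  proof (cases "length (a@b) = 0")
    case True
    then have "a = []" "b = []" by auto
    then show ?thesis using P0 by (simp add: TT_nil)
  next
    case False
    then show ?thesis using P0 by (auto simp: R_def)
  qed
next
  case (Suc n)
  let ?N = "length (a@b)"
  have PS: "P (Suc n) = P n @ outf a b (R n) (\<psi> n)" by (simp add: P_def R_def prefix_Suc)
  have Rn: "R n = (if n < ?N \<and> (\<forall>j<n. \<psi> j = (a@b)!j) then n else ?N)" unfolding R_def by (rule run_eq)
  have RS: "R (Suc n) = (if Suc n < ?N \<and> (\<forall>j<Suc n. \<psi> j = (a@b)!j) then Suc n else ?N)" unfolding R_def by (rule run_eq)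
  show ?case
  proof (cases "n < ?N \<and> (\<forall>j<n. \<psi> j = (a@b)!j)")
    case pend: True
    then have Rn': "R n = n" using Rn by simp
    have Pn: "P n = []" using Suc.IH Rn' pend by simp
    show ?thesis
    proof (cases "\<psi> n = (a@b)!n \<and> Suc n < ?N")
      case True
      then have "R (Suc n) = Suc n" using RS pend less_Suc_eq by auto
      moreover have "outf a b n (\<psi> n) = []" using True by (simp add: outf_def)
      ultimately show ?thesis using PS Pn Rn' True by simp
    next
      case False
      then have "R (Suc n) = ?N" using RS less_Suc_eq by auto
      moreover have "outf a b n (\<psi> n) = map (TT a b \<psi>) [0..<length (outf a b n (\<psi> n))] \<and>
         (\<forall>i. TT a b \<psi> (length (outf a b n (\<psi> n)) + i) = \<psi> (Suc n + i))"
        using step_done[of n a b \<psi>] pend False by blast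
      ultimately show ?thesis using PS Pn Rn' by simp
    qed
  next
    case fin: False
    then have Rn': "R n = ?N" using Rn by simp
    have RS': "R (Suc n) = ?N" using RS fin less_Suc_eq by auto
    have o: "outf a b (R n) (\<psi> n) = [\<psi> n]" using Rn' by (simp add: outf_def)
    have IH: "P n = map (TT a b \<psi>) [0..<length (P n)]"
             "\<And>i. TT a b \<psi> (length (P n) + i) = \<psi> (n + i)" using Suc.IH Rn' by auto
    have e0: "TT a b \<psi> (length (P n)) = \<psi> n" using IH(2)[of 0] by simp
    have "P (Suc n) = map (TT a b \<psi>) [0..<length (P (Suc n))]"
      using PS o IH(1) e0 by simp
    moreover have "\<forall>i. TT a b \<psi> (length (P (Suc n)) + i) = \<psi> (Suc n + i)"
      using PS o IH(2)[of "Suc _"] by simp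
    ultimately show ?thesis using RS' by simp
  qed
qed


lemma run_le: "trans_run (tt L) 0 \<psi> n \<le> length L"
  by (simp add: run_eq)

lemma TT_rational: "rational_homeo (TT a b)"
  unfolding rational_homeo_def
proof (intro conjI exI allI)
  show "homeomorphic_map cantor_top cantor_top (TT a b)" by (rule TT_homeo)
  show "is_transducer {0..length (a@b)} 0 (tt (a@b))"
    by (simp add: is_transducer_def tt_def)
  fix \<psi>
  let ?P = "trans_out_prefix (tt (a@b)) (outf a b) 0 \<psi>"
  let ?R = "trans_run (tt (a@b)) 0 \<psi>"
  let ?N = "length (a@b)"
  have Rlate: "\<And>n. n \<ge> ?N \<Longrightarrow> ?R n = ?N" by (simp add: run_eq)
  have grow: "length (?P (?N + M)) \<ge> M" for M
  proof (induction M)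
    case (Suc M)
    have "?R (?N + M) = ?N" using Rlate by simp
    then have "?P (Suc (?N + M)) = ?P (?N + M) @ [\<psi> (?N + M)]"
      by (simp add: prefix_Suc outf_def)
    then show ?case using Suc by simp
  qed simp
  show "trans_output_is (tt (a@b)) (outf a b) 0 \<psi> (TT a b \<psi>)"
    unfolding trans_output_is_def
  proof (intro conjI allI impI)
    fix m
    show "\<exists>n. m < length (?P n)"
      using grow[of "Suc m"] by (intro exI[of _ "?N + Suc m"]) simp
  next
    fix n k assume k: "k < length (?P n)"
    have "?R n \<le> ?N" by (rule run_le)
    then have "?R n < ?N \<or> ?R n = ?N" by linarith
    then show "TT a b \<psi> k = ?P n ! k"
    proof
      assume "?R n < ?N" then have "?P n = []" using inv[of a b \<psi> n] by simp
      then show ?thesis using k by simp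
    next
      assume "?R n = ?N"
      then have "?P n = map (TT a b \<psi>) [0..<length (?P n)]" using inv[of a b \<psi> n] by simp
      then have "?P n ! k = TT a b \<psi> k" using k by (metis diff_zero length_map length_upt nth_map_upt add_0)
      then show ?thesis by simp
    qed
  qed
qed

theorem proposition2p5:
  fixes E1 E2 :: "(nat \<Rightarrow> bool) set"
  assumes "cantor_clopen E1" "E1 \<noteq> {}" "E1 \<noteq> UNIV"
      and "cantor_clopen E2" "E2 \<noteq> {}" "E2 \<noteq> UNIV"
  shows "\<exists>g. rational_homeo g \<and> g ` E1 \<subseteq> E2"
proof -
  obtain x2 where x2: "x2 \<in> E2" using assms(5) by blast
  obtain w where w: "{y. pre w y} \<subseteq> E2"
    using open_cyl[OF _ x2] assms(4) unfolding cantor_clopen_def by blast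
  obtain x1 where x1: "x1 \<in> UNIV - E1" using assms(3) by blast
  have "openin cantor_top (UNIV - E1)"
    using assms(1) unfolding cantor_clopen_def closedin_def by simp
  then obtain u where u: "{y. pre u y} \<subseteq> UNIV - E1"
    using open_cyl[OF _ x1] by blast
  have "TT u w ` E1 \<subseteq> E2"
  proof
    fix z assume "z \<in> TT u w ` E1"
    then obtain x where x: "x \<in> E1" "z = TT u w x" by blast
    then have "\<not> pre u x" using u by blast
    then have "z = app w x" using x by (simp add: TT_def)
    then show "z \<in> E2" using w by auto
  qed
  then show ?thesis using TT_rational by blast
qed

end
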